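(* (a) Let $n\ge1$ and let $x\in\beta\mathbb{N}$ be an ultrafilter on a finite level with $x\notin\overline{L_0\cup L_1\cup\cdots\cup L_{n-1}}$. Then there is an ultrafilter $y\in\overline{L_n}$ such that $y\,\tilde{\mid}\,x$. (b) Let $x\in\overline{L_m}$ and let $n\ge m$. Then there exists an ultrafilter $y\in\overline{L_n}$ such that $x\,\tilde{\mid}\,y$.
   Context: $\mathbb{N}=\{1,2,3,\dots\}$; $\beta\mathbb{N}$ is the set of ultrafilters on $\mathbb{N}$ (Stone–Čech compactification of discrete $\mathbb{N}$). For $A\subseteq\mathbb{N}$, $\overline{A}=\{x\in\beta\mathbb{N}:A\in x\}$. $P$ is the set of primes, $L_0=\{1\}$, $L_n=\{a_1\cdots a_n:a_1,\dots,a_n\in P\}$. An ultrafilter $x$ is on a finite level if $x\in\overline{L_i}$ for some $i\ge0$. For $x,y\in\beta\mathbb{N}$, $x\,\tilde{\mid}\,y$ iff for every $A\in x$ the set $\{k\in\mathbb{N}:\exists a\in A,\ a\mid k\}$ belongs to $y$. *)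

theory Defs
  imports "HOL-Computational_Algebra.Primes"
begin

definition Npos :: "nat set" where
  "Npos = {k. 1 \<le> k}"

definition ultrafilter_N :: "nat set set \<Rightarrow> bool" where
  "ultrafilter_N U \<longleftrightarrow>
     U \<subseteq> Pow Npos \<and> Npos \<in> U \<and> {} \<notin> U \<and>
     (\<forall>A B. A \<in> U \<longrightarrow> A \<subseteq> B \<longrightarrow> B \<subseteq> Npos \<longrightarrow> B \<in> U) \<and>
     (\<forall>A B. A \<in> U \<longrightarrow> B \<in> U \<longrightarrow> A \<inter> B \<in> U) \<and>
     (\<forall>A. A \<subseteq> Npos \<longrightarrow> A \<in> U \<or> Npos - A \<in> U)"

definition bar :: "nat set \<Rightarrow> nat set set set" where
  "bar A = {U. ultrafilter_N U \<and> A \<in> U}"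

definition L :: "nat \<Rightarrow> nat set" where
  "L n = {k. \<exists>ps. length ps = n \<and> (\<forall>p\<in>set ps. prime p) \<and> k = prod_list ps}"

definition finite_level :: "nat set set \<Rightarrow> bool" where
  "finite_level x \<longleftrightarrow> (\<exists>i. x \<in> bar (L i))"

definition dvd_up :: "nat set \<Rightarrow> nat set" where
  "dvd_up A = {k \<in> Npos. \<exists>a\<in>A. a dvd k}"

definition udvd :: "nat set set \<Rightarrow> nat set set \<Rightarrow> bool" (infix "~|" 50) where
  "udvd x y \<longleftrightarrow> (\<forall>A\<in>x. dvd_up A \<in> y)"

end

theory Submission
  imports Defs
begin

lemma L_pos: "k \<in> L n \<Longrightarrow> 1 \<le> k"
proof -
  assume "k \<in> L n"
  then obtain ps where ps: "\<forall>p\<in>set ps. prime p" "k = prod_list ps" unfolding L_def by auto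
  have "0 \<notin> set ps" using ps(1) by auto
  then have "prod_list ps \<noteq> 0" by (simp add: prod_list_zero_iff)
  then show ?thesis using ps(2) by simp
qed

lemma L_sub: "L n \<subseteq> Npos" using L_pos unfolding Npos_def by auto

lemma uf_sub: "ultrafilter_N x \<Longrightarrow> x \<subseteq> Pow Npos" unfolding ultrafilter_N_def by simp
lemma uf_N: "ultrafilter_N x \<Longrightarrow> Npos \<in> x" unfolding ultrafilter_N_def by simp
lemma uf_empty: "ultrafilter_N x \<Longrightarrow> {} \<notin> x" unfolding ultrafilter_N_def by simp
lemma uf_up: "ultrafilter_N x \<Longrightarrow> A \<in> x \<Longrightarrow> A \<subseteq> B \<Longrightarrow> B \<subseteq> Npos \<Longrightarrow> B \<in> x"
  unfolding ultrafilter_N_def by metis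
lemma uf_int: "ultrafilter_N x \<Longrightarrow> A \<in> x \<Longrightarrow> B \<in> x \<Longrightarrow> A \<inter> B \<in> x"
  unfolding ultrafilter_N_def by metis
lemma uf_compl: "ultrafilter_N x \<Longrightarrow> A \<subseteq> Npos \<Longrightarrow> A \<in> x \<or> Npos - A \<in> x"
  unfolding ultrafilter_N_def by metis

definition push :: "(nat \<Rightarrow> nat) \<Rightarrow> nat set set \<Rightarrow> nat set set" where
  "push g x = {B. B \<subseteq> Npos \<and> {k\<in>Npos. g k \<in> B} \<in> x}"

lemma push_uf:
  assumes u: "ultrafilter_N x" and g: "\<And>k. k \<in> Npos \<Longrightarrow> g k \<in> Npos"
  shows "ultrafilter_N (push g x)"
proof -
  have pre_N: "{k\<in>Npos. g k \<in> Npos} = Npos" using g by auto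
  have ux: "x \<subseteq> Pow Npos" "Npos \<in> x" "{} \<notin> x"
    "\<And>A B. A \<in> x \<Longrightarrow> A \<subseteq> B \<Longrightarrow> B \<subseteq> Npos \<Longrightarrow> B \<in> x"
    "\<And>A B. A \<in> x \<Longrightarrow> B \<in> x \<Longrightarrow> A \<inter> B \<in> x"
    "\<And>A. A \<subseteq> Npos \<Longrightarrow> A \<in> x \<or> Npos - A \<in> x"
    using uf_sub[OF u] uf_N[OF u] uf_empty[OF u] uf_up[OF u] uf_int[OF u] uf_compl[OF u] by blast+
  show ?thesis unfolding ultrafilter_N_def
  proof (intro conjI allI impI)
    show "push g x \<subseteq> Pow Npos" unfolding push_def by auto
    show "Npos \<in> push g x" unfolding push_def using pre_N ux(2) by auto
    show "{} \<notin> push g x" unfolding push_def using ux(3) by auto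
  next
    fix A B assume "A \<in> push g x" "A \<subseteq> B" "B \<subseteq> Npos"
    then show "B \<in> push g x" unfolding push_def
      by (auto intro: ux(4)[of "{k\<in>Npos. g k \<in> A}"])
  next
    fix A B assume "A \<in> push g x" "B \<in> push g x"
    then have "{k\<in>Npos. g k \<in> A} \<inter> {k\<in>Npos. g k \<in> B} \<in> x" unfolding push_def using ux(5) by auto
    moreover have "{k\<in>Npos. g k \<in> A} \<inter> {k\<in>Npos. g k \<in> B} = {k\<in>Npos. g k \<in> A \<inter> B}" by auto
    ultimately show "A \<inter> B \<in> push g x" using \<open>A \<in> push g x\<close> unfolding push_def by auto
  next
    fix A :: "nat set" assume A: "A \<subseteq> Npos"
    have "{k\<in>Npos. g k \<in> Npos - A} = Npos - {k\<in>Npos. g k \<in> A}" using g by auto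
    then show "A \<in> push g x \<or> Npos - A \<in> push g x" unfolding push_def
      using ux(6)[of "{k\<in>Npos. g k \<in> A}"] A by auto
  qed
qed

lemma partb:
  assumes x: "x \<in> bar (L m)" and mn: "m \<le> n"
  shows "\<exists>y. y \<in> bar (L n) \<and> x ~| y"
proof -
  define f where "f k = k * 2^(n-m)" for k :: nat
  have u: "ultrafilter_N x" and Lm: "L m \<in> x" using x unfolding bar_def by auto
  have ux: "x \<subseteq> Pow Npos"
    "\<And>A B. A \<in> x \<Longrightarrow> A \<subseteq> B \<Longrightarrow> B \<subseteq> Npos \<Longrightarrow> B \<in> x"
    using uf_sub[OF u] uf_up[OF u] by blast+
  have g: "\<And>k. k \<in> Npos \<Longrightarrow> f k \<in> Npos" unfolding f_def Npos_def by simp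
  have "L m \<subseteq> {k\<in>Npos. f k \<in> L n}"
  proof
    fix k assume "k \<in> L m"
    then obtain ps where ps: "length ps = m" "\<forall>p\<in>set ps. prime p" "k = prod_list ps" unfolding L_def by auto
    have "f k = prod_list (ps @ replicate (n-m) 2)" using ps(3) unfolding f_def by simp
    moreover have "length (ps @ replicate (n-m) 2) = n" using ps(1) mn by simp
    moreover have "\<forall>p\<in>set (ps @ replicate (n-m) 2). prime p" using ps(2) by auto
    ultimately have "f k \<in> L n" unfolding L_def by blast
    then show "k \<in> {k\<in>Npos. f k \<in> L n}" using L_sub \<open>k \<in> L m\<close> by auto
  qed
  then have "L n \<in> push f x" unfolding push_def using ux(2)[OF Lm] L_sub by auto
  moreover have "x ~| push f x" unfolding udvd_def
  proof
    fix A assume A: "A \<in> x"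
    have "A \<subseteq> {k\<in>Npos. f k \<in> dvd_up A}"
    proof
      fix a assume a: "a \<in> A"
      then have "a \<in> Npos" using ux(1) A by auto
      then show "a \<in> {k\<in>Npos. f k \<in> dvd_up A}" using a g unfolding dvd_up_def f_def by (auto intro!: bexI[where x=a])
    qed
    then show "dvd_up A \<in> push f x" unfolding push_def using ux(2)[OF A]
      by (auto simp: dvd_up_def)
  qed
  ultimately show ?thesis using push_uf[of x f, OF u g] unfolding bar_def by auto
qed

lemma L_div:
  assumes "k \<in> L i" "n \<le> i" shows "\<exists>d. d \<in> L n \<and> d dvd k"
proof -
  obtain ps where ps: "length ps = i" "\<forall>p\<in>set ps. prime p" "k = prod_list ps" using assms(1) unfolding L_def by auto
  have "prod_list ps = prod_list (take n ps) * prod_list (drop n ps)"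
    by (metis append_take_drop_id prod_list.append)
  then have "prod_list (take n ps) dvd k" using ps(3) by simp
  moreover have "prod_list (take n ps) \<in> L n" unfolding L_def using ps assms(2)
    by (intro CollectI exI[of _ "take n ps"]) (auto dest: in_set_takeD)
  ultimately show ?thesis by blast
qed

lemma parta:
  assumes n: "1 \<le> n" and u: "ultrafilter_N x" and fl: "finite_level x"
    and nb: "x \<notin> bar (\<Union>i<n. L i)"
  shows "\<exists>y. y \<in> bar (L n) \<and> y ~| x"
proof -
  obtain i where Li: "L i \<in> x" using fl unfolding finite_level_def bar_def by auto
  have ux: "x \<subseteq> Pow Npos"
    "\<And>A B. A \<in> x \<Longrightarrow> A \<subseteq> B \<Longrightarrow> B \<subseteq> Npos \<Longrightarrow> B \<in> x"
    "\<And>A B. A \<in> x \<Longrightarrow> B \<in> x \<Longrightarrow> A \<inter> B \<in> x"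
    using uf_sub[OF u] uf_up[OF u] uf_int[OF u] by blast+
  have ni: "n \<le> i"
  proof (rule ccontr)
    assume "\<not> n \<le> i"
    then have "L i \<subseteq> (\<Union>i<n. L i)" by (intro UN_upper) simp
    moreover have "(\<Union>i<n. L i) \<subseteq> Npos" using L_sub by auto
    ultimately have "(\<Union>i<n. L i) \<in> x" using ux(2)[OF Li] by auto
    then show False using nb u unfolding bar_def by auto
  qed
  define g where "g k = (if \<exists>d. d \<in> L n \<and> d dvd k then SOME d. d \<in> L n \<and> d dvd k else 1)" for k
  have gL: "k \<in> L i \<Longrightarrow> g k \<in> L n \<and> g k dvd k" for k
  proof -
    assume "k \<in> L i"
    then have e: "\<exists>d. d \<in> L n \<and> d dvd k" using L_div ni by blast
    show ?thesis unfolding g_def using someI_ex[OF e] e by simp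
  qed
  have gN: "\<And>k. k \<in> Npos \<Longrightarrow> g k \<in> Npos"
  proof -
    fix k
    show "g k \<in> Npos"
    proof (cases "\<exists>d. d \<in> L n \<and> d dvd k")
      case True
      then have "g k \<in> L n" unfolding g_def by (auto intro: someI2_ex)
      then show ?thesis using L_sub by auto
    next
      case False
      then show ?thesis unfolding g_def Npos_def by auto
    qed
  qed
  have "L i \<subseteq> {k\<in>Npos. g k \<in> L n}" using gL L_sub by auto
  then have "L n \<in> push g x" unfolding push_def using ux(2)[OF Li] L_sub by auto
  moreover have "push g x ~| x" unfolding udvd_def
  proof
    fix A assume "A \<in> push g x"
    then have P: "{k\<in>Npos. g k \<in> A} \<in> x" unfolding push_def by auto
    have "{k\<in>Npos. g k \<in> A} \<inter> L i \<subseteq> dvd_up A" unfolding dvd_up_def using gL by auto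
    then show "dvd_up A \<in> x" using ux(2)[OF ux(3)[OF P Li]] by (auto simp: dvd_up_def)
  qed
  ultimately show ?thesis using push_uf[of x g, OF u gN] unfolding bar_def by auto
qed

theorem theorem2p14:
  shows "(\<forall>(n::nat) x. 1 \<le> n \<longrightarrow> ultrafilter_N x \<longrightarrow> finite_level x \<longrightarrow>
            x \<notin> bar (\<Union>i<n. L i) \<longrightarrow>
            (\<exists>y. y \<in> bar (L n) \<and> y ~| x))
       \<and> (\<forall>(m::nat) (n::nat) x. x \<in> bar (L m) \<longrightarrow> m \<le> n \<longrightarrow>
            (\<exists>y. y \<in> bar (L n) \<and> x ~| y))"
  using parta partb by blast

end
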